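(* For every $L \in \mathbb{N}_0$, every labeled graph $(G,\ell_G)$ and all vertices $u,v \in V(G)$, the following are equivalent: (1) $u$ and $v$ receive the same color after $L$ iterations of the $1$-MWL, i.e. $C^{1,\mathrm{m}}_L(u) = C^{1,\mathrm{m}}_L(v)$; (2) the mean unrolling trees $\mathsf{m\text{-}unr}(G,u,L)$ and $\mathsf{m\text{-}unr}(G,v,L)$ are isomorphic (as labeled rooted trees).
   Context: A labeled graph $(G,\ell_G)$ is a finite undirected graph $G$ with a label function $\ell_G\colon V(G)\to\Sigma$, $\Sigma$ a countable set; $N(v)$ denotes the neighborhood of $v$. For a finite multiset $X$, $\mathsf{set}(X)$ is the set of its distinct elements, $\mathsf{mul}_X(x)$ the multiplicity of $x$, and $\mathsf{freq}(X) = \{(x, \mathsf{mul}_X(x)/|X|) : x \in \mathsf{set}(X)\}$. The $1$-MWL (mean $1$-dimensional Weisfeiler--Leman algorithm) computes colorings $C^{1,\mathrm{m}}_t\colon V(G)\to\mathbb{N}$: $C^{1,\mathrm{m}}_0 = \ell_G$ (via a fixed injection $\Sigma\to\mathbb{N}$), and for $t>0$, $C^{1,\mathrm{m}}_t(v) = \mathsf{RELABEL}\bigl(C^{1,\mathrm{m}}_{t-1}(v), \mathsf{freq}(M_{t-1}(v))\bigr)$, where $M_{t-1}(v) = \{\!\!\{ C^{1,\mathrm{m}}_{t-1}(w) : w \in N(v)\}\!\!\}$ and $\mathsf{RELABEL}$ injectively maps each pair to a natural number not used in previous iterations. The unrolling tree $\mathsf{unr}(G,u,L)$ is the labeled rooted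 tree defined inductively: for $L=0$ it is a single vertex labeled $\ell_G(u)$; for $L>0$ it has a root labeled $\ell_G(u)$ under which, for each $w\in N(u)$, a copy of $\mathsf{unr}(G,w,L-1)$ is attached. Edges are regarded as directed away from the root; the root is at level $0$. Isomorphism of labeled rooted trees means a root-preserving, edge-preserving, label-preserving bijection. Mean pruning: starting from $T=\mathsf{unr}(G,u,L)$, for $l = L-1, L-2, \dots, 0$ in this order, for every vertex $x$ at level $l$ of the current tree, consider the multiset $\mathsf{des}_T(x)$ of isomorphism types of the subtrees rooted at the children of $x$; let $c$ be the greatest common divisor of the multiplicities $\{\mathsf{mul}_{\mathsf{des}_T(x)}(a) : a \in \mathsf{set}(\mathsf{des}_T(x))\}$; for each type $a$, delete $\frac{c-1}{c}\mathsf{mul}_{\mathsf{des}_T(x)}(a)$ of the child subtrees of $x$ of type $a$ (so $\mathsf{mul}(a)/c$ copies remain), updating $T$. The resulting tree is the mean unrolling tree $\mathsf{m\text{-}unr}(G,u,L)$. *)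

theory Defs
  imports Complex_Main "HOL-Library.Multiset"
begin

definition graph :: "'v set \<Rightarrow> ('v \<Rightarrow> 'v \<Rightarrow> bool) \<Rightarrow> bool" where
  "graph V E \<longleftrightarrow> finite V \<and> (\<forall>x y. E x y \<longrightarrow> x \<in> V \<and> y \<in> V)
     \<and> (\<forall>x y. E x y \<longrightarrow> E y x) \<and> (\<forall>x. \<not> E x x)"

definition nbhd :: "'v set \<Rightarrow> ('v \<Rightarrow> 'v \<Rightarrow> bool) \<Rightarrow> 'v \<Rightarrow> 'v set" where
  "nbhd V E v = {w \<in> V. E v w}"

definition freq :: "'a multiset \<Rightarrow> ('a \<times> rat) set" where
  "freq X = (\<lambda>x. (x, of_nat (count X x) / of_nat (size X))) ` set_mset X"

text \<open>The colouring C_t, parametrised by the injection enc of labels into nat and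
  the relabelling function (relabel t is RELABEL used in iteration t+1).\<close>
fun mwl_color :: "('l \<Rightarrow> nat) \<Rightarrow> (nat \<Rightarrow> nat \<times> (nat \<times> rat) set \<Rightarrow> nat)
    \<Rightarrow> 'v set \<Rightarrow> ('v \<Rightarrow> 'v \<Rightarrow> bool) \<Rightarrow> ('v \<Rightarrow> 'l) \<Rightarrow> nat \<Rightarrow> 'v \<Rightarrow> nat" where
  "mwl_color enc relabel V E lab 0 v = enc (lab v)"
| "mwl_color enc relabel V E lab (Suc t) v =
     relabel t (mwl_color enc relabel V E lab t v,
                freq (image_mset (mwl_color enc relabel V E lab t) (mset_set (nbhd V E v))))"

text \<open>Admissible RELABEL: injective (on its actual domain: pairs whose second
  component is finite) and always producing a number not used in previous iterations
  (neither as an initial colour nor by an earlier iteration).\<close>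
definition admissible_relabel :: "('l \<Rightarrow> nat) \<Rightarrow> (nat \<Rightarrow> nat \<times> (nat \<times> rat) set \<Rightarrow> nat) \<Rightarrow> bool" where
  "admissible_relabel enc relabel \<longleftrightarrow>
     inj enc
   \<and> (\<forall>t. inj_on (relabel t) {x. finite (snd x)})
   \<and> (\<forall>t x l. finite (snd x) \<longrightarrow> relabel t x \<noteq> enc l)
   \<and> (\<forall>t t' x y. t' < t \<longrightarrow> finite (snd x) \<longrightarrow> finite (snd y) \<longrightarrow> relabel t x \<noteq> relabel t' y)"

text \<open>Concrete rooted labeled trees (children stored in a list; the order is irrelevant
  for isomorphism). Vertices are addressed by positions (paths of child indices);
  the root is the empty position; edges go from p to p @ [i].\<close>
datatype 'l ltree = Node (root_label: 'l) (children: "'l ltree list")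

fun subtree_at :: "'l ltree \<Rightarrow> nat list \<Rightarrow> 'l ltree option" where
  "subtree_at t [] = Some t"
| "subtree_at (Node a cs) (i # p) = (if i < length cs then subtree_at (cs ! i) p else None)"

definition positions :: "'l ltree \<Rightarrow> nat list set" where
  "positions t = {p. subtree_at t p \<noteq> None}"

definition label_at :: "'l ltree \<Rightarrow> nat list \<Rightarrow> 'l" where
  "label_at t p = root_label (the (subtree_at t p))"

definition tree_edge :: "nat list \<Rightarrow> nat list \<Rightarrow> bool" where
  "tree_edge p q \<longleftrightarrow> (\<exists>i. q = p @ [i])"

definition tree_iso :: "'l ltree \<Rightarrow> 'l ltree \<Rightarrow> bool" where
  "tree_iso s t \<longleftrightarrow> (\<exists>f. bij_betw f (positions s) (positions t) \<and> f [] = []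
     \<and> (\<forall>p\<in>positions s. \<forall>q\<in>positions s. tree_edge p q \<longleftrightarrow> tree_edge (f p) (f q))
     \<and> (\<forall>p\<in>positions s. label_at s p = label_at t (f p)))"

definition enum_set :: "'a set \<Rightarrow> 'a list" where
  "enum_set A = (SOME xs. distinct xs \<and> set xs = A)"

fun unr :: "'v set \<Rightarrow> ('v \<Rightarrow> 'v \<Rightarrow> bool) \<Rightarrow> ('v \<Rightarrow> 'l) \<Rightarrow> 'v \<Rightarrow> nat \<Rightarrow> 'l ltree" where
  "unr V E lab u 0 = Node (lab u) []"
| "unr V E lab u (Suc L) = Node (lab u) (map (\<lambda>w. unr V E lab w L) (enum_set (nbhd V E u)))"

definition mult_iso :: "'l ltree list \<Rightarrow> 'l ltree \<Rightarrow> nat" where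
  "mult_iso cs x = length (filter (tree_iso x) cs)"

text \<open>One pruning step at a vertex with (already pruned) children cs: with c the gcd of
  the multiplicities of the isomorphism types, keep exactly mul(a)/c children of each
  type a (namely the first ones), deleting the others.\<close>
definition prune_children :: "'l ltree list \<Rightarrow> 'l ltree list" where
  "prune_children cs =
     (let c = Gcd (mult_iso cs ` set cs)
      in map fst (filter (\<lambda>(x, i). length (filter (tree_iso x) (take i cs)) < mult_iso cs x div c)
                    (zip cs [0..<length cs])))"

text \<open>Processing the levels L-1, ..., 0 in order is the same as pruning bottom-up:
  a vertex is processed after all its descendants, and processing a vertex only
  changes its own set of children.\<close>
fun mean_prune :: "'l ltree \<Rightarrow> 'l ltree" where
  "mean_prune (Node a cs) = Node a (prune_children (map mean_prune cs))"

definition m_unr :: "'v set \<Rightarrow> ('v \<Rightarrow> 'v \<Rightarrow> bool) \<Rightarrow> ('v \<Rightarrow> 'l) \<Rightarrow> 'v \<Rightarrow> nat \<Rightarrow> 'l ltree" where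
  "m_unr V E lab u L = mean_prune (unr V E lab u L)"

end

theory Submission
  imports Defs "HOL-Combinatorics.Permutations"
begin

datatype 'l utree = UNode 'l "'l utree multiset"

fun to_u :: "'l ltree \<Rightarrow> 'l utree" where
  "to_u (Node a cs) = UNode a (mset (map to_u cs))"

lemma pos_nil[simp]: "[] \<in> positions t"
  by (simp add: positions_def)

lemma pos_cons[simp]: "(i # p) \<in> positions (Node a cs) \<longleftrightarrow> i < length cs \<and> p \<in> positions (cs ! i)"
  by (simp add: positions_def)

lemma label_nil[simp]: "label_at (Node a cs) [] = a"
  by (simp add: label_at_def)

lemma label_cons[simp]: "i < length cs \<Longrightarrow> label_at (Node a cs) (i # p) = label_at (cs ! i) p"
  by (simp add: label_at_def)

lemma pos_prefix: "p @ q \<in> positions t \<Longrightarrow> p \<in> positions t"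
proof (induction p arbitrary: t)
  case Nil then show ?case by simp
next
  case (Cons i p)
  obtain a cs where t: "t = Node a cs" by (cases t)
  from Cons.prems show ?case using Cons.IH by (simp add: t)
qed

lemma edge_nil_nil[simp]: "\<not> tree_edge p []"
  by (simp add: tree_edge_def)

lemma edge_nil: "tree_edge [] q \<longleftrightarrow> length q = 1"
  by (auto simp add: tree_edge_def length_Suc_conv)

lemma edge_cons_cons[simp]: "tree_edge (i # p) (j # q) \<longleftrightarrow> i = j \<and> tree_edge p q"
  by (auto simp add: tree_edge_def)

lemma edge_snoc: "tree_edge p (p @ [j])"
  by (auto simp add: tree_edge_def)

definition iso_fun :: "'l ltree \<Rightarrow> 'l ltree \<Rightarrow> (nat list \<Rightarrow> nat list) \<Rightarrow> bool" where
  "iso_fun s t f \<longleftrightarrow> bij_betw f (positions s) (positions t) \<and> f [] = []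
     \<and> (\<forall>p\<in>positions s. \<forall>q\<in>positions s. tree_edge p q \<longleftrightarrow> tree_edge (f p) (f q))
     \<and> (\<forall>p\<in>positions s. label_at s p = label_at t (f p))"

lemma tree_iso_fun: "tree_iso s t \<longleftrightarrow> (\<exists>f. iso_fun s t f)"
  by (simp add: tree_iso_def iso_fun_def)

lemma iso_prefix:
  assumes "iso_fun s t f"
  shows "p \<in> positions s \<Longrightarrow> length (f p) = length p \<and> (\<forall>k. f (take k p) = take k (f p))"
proof (induction p rule: rev_induct)
  case Nil
  then show ?case using assms by (simp add: iso_fun_def)
next
  case (snoc j p)
  have pp: "p \<in> positions s" using snoc.prems pos_prefix by blast
  have IH: "length (f p) = length p" "\<And>k. f (take k p) = take k (f p)" using snoc.IH pp by auto
  have "tree_edge (f p) (f (p @ [j]))" using assms snoc.prems pp edge_snoc unfolding iso_fun_def by blast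
  then obtain j' where fj: "f (p @ [j]) = f p @ [j']" by (auto simp: tree_edge_def)
  have "f (take k (p @ [j])) = take k (f (p @ [j]))" for k
  proof (cases "k \<le> length p")
    case True then show ?thesis using IH fj by simp
  next
    case False then show ?thesis using IH fj by simp
  qed
  then show ?case using IH fj by simp
qed

lemma iso_fun_child:
  assumes f: "iso_fun (Node a cs) t f" and i: "i < length cs" and p: "p \<in> positions (cs ! i)"
  shows "f (i # p) = hd (f [i]) # tl (f (i # p)) \<and> length (f [i]) = 1"
proof -
  have ip: "i # p \<in> positions (Node a cs)" using i p by simp
  have i1: "[i] \<in> positions (Node a cs)" using i by simp
  from iso_prefix[OF f ip] have "f (take 1 (i # p)) = take 1 (f (i # p))" "length (f (i#p)) = Suc (length p)"
    by (blast, simp)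
  moreover from iso_prefix[OF f i1] have "length (f [i]) = 1" by simp
  ultimately show ?thesis by (cases "f (i # p)") auto
qed

lemma iso_decomp:
  assumes f: "iso_fun (Node a cs) (Node b ds) f"
  shows "a = b \<and> (\<exists>\<pi>. bij_betw \<pi> {..<length cs} {..<length ds} \<and>
           (\<forall>i<length cs. \<exists>g. iso_fun (cs ! i) (ds ! \<pi> i) g))"
proof -
  let ?s = "Node a cs" and ?t = "Node b ds"
  have bij: "bij_betw f (positions ?s) (positions ?t)" and f0: "f [] = []"
    and edg: "\<forall>p\<in>positions ?s. \<forall>q\<in>positions ?s. tree_edge p q \<longleftrightarrow> tree_edge (f p) (f q)"
    and lab: "\<forall>p\<in>positions ?s. label_at ?s p = label_at ?t (f p)"
    using f by (auto simp: iso_fun_def)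
  have inj: "inj_on f (positions ?s)" using bij by (rule bij_betw_imp_inj_on)
  have img: "f ` positions ?s = positions ?t" using bij by (rule bij_betw_imp_surj_on)
  define \<pi> where "\<pi> i = hd (f [i])" for i
  define G where "G i p = tl (f (i # p))" for i p
  have fc: "f (i # p) = \<pi> i # G i p" if "i < length cs" "p \<in> positions (cs ! i)" for i p
    unfolding \<pi>_def G_def using iso_fun_child[OF f that] by blast
  have f1: "f [i] = [\<pi> i]" if "i < length cs" for i
  proof -
    have "length (f [i]) = 1" using iso_fun_child[OF f that pos_nil] by blast
    then have "G i [] = []" unfolding G_def by (cases "f [i]") auto
    then show ?thesis using fc[OF that pos_nil] by simp
  qed
  have pil: "\<pi> i < length ds" if "i < length cs" for i
  proof -
    have "f [i] \<in> positions ?t" using img that by auto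
    then show ?thesis using f1[OF that] by simp
  qed
  have Gpos: "G i p \<in> positions (ds ! \<pi> i)" if "i < length cs" "p \<in> positions (cs ! i)" for i p
  proof -
    have "f (i # p) \<in> positions ?t" using img that by auto
    then show ?thesis using fc[OF that] by simp
  qed
  have preim: "\<exists>i p. i < length cs \<and> p \<in> positions (cs ! i) \<and> j = \<pi> i \<and> q = G i p"
    if "j < length ds" "q \<in> positions (ds ! j)" for j q
  proof -
    have "j # q \<in> positions ?t" using that by simp
    then have "j # q \<in> f ` positions ?s" using img by simp
    then obtain r where r: "r \<in> positions ?s" "f r = j # q" by (rule imageE) auto
    have "r \<noteq> []" using r f0 by auto
    then obtain i p where rr: "r = i # p" by (cases r) auto
    then have ip: "i < length cs" "p \<in> positions (cs ! i)" using r by auto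
    then show ?thesis using r rr fc[OF ip] by auto
  qed
  have piinj: "inj_on \<pi> {..<length cs}"
  proof (rule inj_onI)
    fix i j assume "i \<in> {..<length cs}" "j \<in> {..<length cs}" "\<pi> i = \<pi> j"
    then have "f [i] = f [j]" "[i] \<in> positions ?s" "[j] \<in> positions ?s" using f1 by auto
    then have "[i] = [j]" by (rule inj_onD[OF inj])
    then show "i = j" by simp
  qed
  have pibij: "bij_betw \<pi> {..<length cs} {..<length ds}"
    unfolding bij_betw_def
  proof (intro conjI piinj subset_antisym)
    show "\<pi> ` {..<length cs} \<subseteq> {..<length ds}" using pil by auto
    show "{..<length ds} \<subseteq> \<pi> ` {..<length cs}"
    proof
      fix j assume "j \<in> {..<length ds}"
      then obtain i p where "i < length cs" "j = \<pi> i" using preim[of j "[]"] by auto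
      then show "j \<in> \<pi> ` {..<length cs}" by auto
    qed
  qed
  have sub: "iso_fun (cs ! i) (ds ! \<pi> i) (G i)" if i: "i < length cs" for i
    unfolding iso_fun_def
  proof (intro conjI ballI)
    show "G i [] = []" using f1[OF i] by (simp add: G_def)
    show "bij_betw (G i) (positions (cs ! i)) (positions (ds ! \<pi> i))"
      unfolding bij_betw_def
    proof (intro conjI subset_antisym)
      show "inj_on (G i) (positions (cs ! i))"
      proof (rule inj_onI)
        fix p q assume pq: "p \<in> positions (cs ! i)" "q \<in> positions (cs ! i)" "G i p = G i q"
        have "f (i # p) = \<pi> i # G i p" using fc[OF i pq(1)] .
        moreover have "f (i # q) = \<pi> i # G i q" using fc[OF i pq(2)] .
        ultimately have "f (i # p) = f (i # q)" using pq(3) by simp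
        moreover have "i # p \<in> positions ?s" "i # q \<in> positions ?s" using pq i by auto
        ultimately have "i # p = i # q" by (rule inj_onD[OF inj])
        then show "p = q" by blast
      qed
      show "G i ` positions (cs ! i) \<subseteq> positions (ds ! \<pi> i)" using Gpos i by auto
      show "positions (ds ! \<pi> i) \<subseteq> G i ` positions (cs ! i)"
      proof
        fix q assume q: "q \<in> positions (ds ! \<pi> i)"
        obtain i' p where ip: "i' < length cs" "p \<in> positions (cs ! i')" "\<pi> i = \<pi> i'" "q = G i' p"
          using preim[OF pil[OF i] q] by auto
        have "i = i'" by (rule inj_onD[OF piinj ip(3)]) (use i ip(1) in auto)
        then have "i' = i" by simp
        then show "q \<in> G i ` positions (cs ! i)" using ip by auto
      qed
    qed
  next
    fix p q assume pq: "p \<in> positions (cs ! i)" "q \<in> positions (cs ! i)"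
    have "tree_edge p q \<longleftrightarrow> tree_edge (i # p) (i # q)" by simp
    also have "\<dots> \<longleftrightarrow> tree_edge (f (i # p)) (f (i # q))"
    proof -
      have "i # p \<in> positions ?s" "i # q \<in> positions ?s" using pq i by auto
      then show ?thesis using edg by blast
    qed
    also have "\<dots> \<longleftrightarrow> tree_edge (G i p) (G i q)" using fc[OF i] pq by simp
    finally show "tree_edge p q \<longleftrightarrow> tree_edge (G i p) (G i q)" .
  next
    fix p assume p: "p \<in> positions (cs ! i)"
    have "label_at (cs ! i) p = label_at ?s (i # p)" using i by simp
    also have "\<dots> = label_at ?t (f (i # p))"
    proof -
      have "i # p \<in> positions ?s" using p i by auto
      then show ?thesis using lab by blast
    qed
    also have "\<dots> = label_at (ds ! \<pi> i) (G i p)" using fc[OF i p] pil[OF i] by simp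
    finally show "label_at (cs ! i) p = label_at (ds ! \<pi> i) (G i p)" .
  qed
  have "label_at ?s [] = label_at ?t (f [])" using bspec[OF lab pos_nil] .
  then have "a = b" using f0 by simp
  then show ?thesis using pibij sub by blast
qed

lemma iso_build:
  assumes pib: "bij_betw \<pi> {..<length cs} {..<length ds}"
    and F: "\<forall>i<length cs. iso_fun (cs ! i) (ds ! \<pi> i) (F i)"
  shows "iso_fun (Node a cs) (Node a ds) (\<lambda>p. case p of [] \<Rightarrow> [] | i # q \<Rightarrow> \<pi> i # F i q)"
    (is "iso_fun ?s ?t ?g")
proof -
  have Fb: "bij_betw (F i) (positions (cs ! i)) (positions (ds ! \<pi> i))" if "i < length cs" for i
    using F that by (simp add: iso_fun_def)
  have Finj: "inj_on (F i) (positions (cs ! i))" if "i < length cs" for i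
    using Fb[OF that] by (rule bij_betw_imp_inj_on)
  have Fimg: "F i ` positions (cs ! i) = positions (ds ! \<pi> i)" if "i < length cs" for i
    using Fb[OF that] by (rule bij_betw_imp_surj_on)
  have pinj: "inj_on \<pi> {..<length cs}" using pib by (rule bij_betw_imp_inj_on)
  have pimg: "\<pi> ` {..<length cs} = {..<length ds}" using pib by (rule bij_betw_imp_surj_on)
  have Flen: "length (F i p) = length p" if "i < length cs" "p \<in> positions (cs ! i)" for i p
    using iso_prefix[of "cs ! i" "ds ! \<pi> i" "F i" p] F that by blast
  have Fedge: "tree_edge p q \<longleftrightarrow> tree_edge (F i p) (F i q)"
    if "i < length cs" "p \<in> positions (cs ! i)" "q \<in> positions (cs ! i)" for i p q
    using F that unfolding iso_fun_def by blast
  have Flab: "label_at (cs ! i) p = label_at (ds ! \<pi> i) (F i p)"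
    if "i < length cs" "p \<in> positions (cs ! i)" for i p
    using F that unfolding iso_fun_def by blast
  have pil: "\<pi> i < length ds" if "i < length cs" for i using pimg that by auto
  have inj: "inj_on ?g (positions ?s)"
  proof (rule inj_onI)
    fix p q assume p: "p \<in> positions ?s" and q: "q \<in> positions ?s" and e: "?g p = ?g q"
    show "p = q"
    proof (cases p)
      case Nil then show ?thesis using e by (cases q) auto
    next
      case (Cons i p')
      then obtain j q' where qq: "q = j # q'" using e by (cases q) auto
      have ij: "i < length cs" "j < length cs" "p' \<in> positions (cs ! i)" "q' \<in> positions (cs ! j)"
        using p q Cons qq by auto
      have "\<pi> i = \<pi> j" using e Cons qq by simp
      then have "i = j" using inj_onD[OF pinj] ij by auto
      moreover have "F i p' = F i q'" using e Cons qq \<open>i = j\<close> by simp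
      ultimately have "p' = q'" using inj_onD[OF Finj[OF ij(1)]] ij by auto
      then show ?thesis using Cons qq \<open>i = j\<close> by simp
    qed
  qed
  have img: "?g ` positions ?s = positions ?t"
  proof (intro subset_antisym subsetI)
    fix x assume "x \<in> ?g ` positions ?s"
    then obtain p where p: "p \<in> positions ?s" "x = ?g p" by auto
    show "x \<in> positions ?t"
    proof (cases p)
      case Nil then show ?thesis using p by simp
    next
      case (Cons i p')
      then have "i < length cs" "p' \<in> positions (cs ! i)" using p by auto
      moreover from this have "F i p' \<in> positions (ds ! \<pi> i)" using Fimg by blast
      ultimately show ?thesis using p Cons pil by simp
    qed
  next
    fix x assume x: "x \<in> positions ?t"
    show "x \<in> ?g ` positions ?s"
    proof (cases x)
      case Nil
      show ?thesis by (rule rev_image_eqI[OF pos_nil]) (simp add: Nil)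
    next
      case (Cons j q)
      then have jq: "j < length ds" "q \<in> positions (ds ! j)" using x by auto
      have "j \<in> \<pi> ` {..<length cs}" using pimg jq by simp
      then obtain i where i: "i < length cs" "j = \<pi> i" by blast
      have "q \<in> F i ` positions (cs ! i)" using Fimg[OF i(1)] jq i by simp
      then obtain p where pp: "p \<in> positions (cs ! i)" "q = F i p" by blast
      then have "x = ?g (i # p)" using Cons i by simp
      moreover have "i # p \<in> positions ?s" using i pp by simp
      ultimately show ?thesis by (rule rev_image_eqI[rotated])
    qed
  qed
  have edge: "tree_edge p q \<longleftrightarrow> tree_edge (?g p) (?g q)" if p: "p \<in> positions ?s" and q: "q \<in> positions ?s" for p q
  proof (cases p)
    case Nil
    show ?thesis
    proof (cases q)
      case Nil then show ?thesis using \<open>p = []\<close> by simp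
    next
      case (Cons j q')
      then have "j < length cs" "q' \<in> positions (cs ! j)" using q by auto
      then show ?thesis using Flen Cons \<open>p = []\<close> by (simp add: edge_nil)
    qed
  next
    case pc: (Cons i p')
    show ?thesis
    proof (cases q)
      case Nil then show ?thesis using pc by simp
    next
      case qc: (Cons j q')
      have ij: "i < length cs" "j < length cs" "p' \<in> positions (cs ! i)" "q' \<in> positions (cs ! j)"
        using p q pc qc by auto
      have "\<pi> i = \<pi> j \<longleftrightarrow> i = j" using inj_onD[OF pinj] ij by auto
      then show ?thesis using pc qc Fedge[OF ij(1) ij(3)] ij by auto
    qed
  qed
  have lab: "label_at ?s p = label_at ?t (?g p)" if p: "p \<in> positions ?s" for p
  proof (cases p)
    case Nil then show ?thesis by simp
  next
    case (Cons i p')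
    then have "i < length cs" "p' \<in> positions (cs ! i)" using p by auto
    then show ?thesis using Cons Flab pil by simp
  qed
  show ?thesis unfolding iso_fun_def bij_betw_def using inj img edge lab by simp
qed

lemma mset_perm:
  assumes "bij_betw \<pi> {..<length cs} {..<length ds}" "\<forall>i<length cs. h (cs ! i) = h (ds ! \<pi> i)"
  shows "mset (map h cs) = mset (map h ds)"
proof -
  have "map h cs = map (\<lambda>i. h (ds ! \<pi> i)) [0..<length cs]"
    using assms(2) by (intro nth_equalityI) auto
  then have "mset (map h cs) = image_mset ((\<lambda>j. h (ds ! j)) \<circ> \<pi>) (mset_set {..<length cs})"
    by (simp add: atLeast0LessThan o_def)
  also have "\<dots> = image_mset (\<lambda>j. h (ds ! j)) (image_mset \<pi> (mset_set {..<length cs}))"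
    by (simp add: image_mset.compositionality)
  also have "image_mset \<pi> (mset_set {..<length cs}) = mset_set {..<length ds}"
    using assms(1) by (simp add: image_mset_mset_set bij_betw_def)
  also have "image_mset (\<lambda>j. h (ds ! j)) (mset_set {..<length ds}) = mset (map h ds)"
  proof -
    have "map h ds = map (\<lambda>j. h (ds ! j)) [0..<length ds]" by (rule nth_equalityI) auto
    then show ?thesis by (simp add: atLeast0LessThan)
  qed
  finally show ?thesis .
qed

lemma tree_iso_to_u: "tree_iso s t \<longleftrightarrow> to_u s = to_u t"
proof (induction s arbitrary: t)
  case (Node a cs)
  obtain b ds where t: "t = Node b ds" by (cases t)
  show ?case
  proof
    assume "tree_iso (Node a cs) t"
    then obtain f where "iso_fun (Node a cs) (Node b ds) f" using t tree_iso_fun by blast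
    from iso_decomp[OF this] obtain \<pi> where ab: "a = b" and pib: "bij_betw \<pi> {..<length cs} {..<length ds}"
      and sub: "\<forall>i<length cs. \<exists>g. iso_fun (cs ! i) (ds ! \<pi> i) g" by blast
    have "\<forall>i<length cs. to_u (cs ! i) = to_u (ds ! \<pi> i)"
      using sub Node.IH tree_iso_fun by (metis nth_mem)
    then have "mset (map to_u cs) = mset (map to_u ds)" using mset_perm[OF pib] by blast
    then show "to_u (Node a cs) = to_u t" using t ab by simp
  next
    assume "to_u (Node a cs) = to_u t"
    then have ab: "a = b" and ms: "mset (map to_u cs) = mset (map to_u ds)" using t by auto
    from mset_eq_permutation[OF ms] obtain p where p: "p permutes {..<length (map to_u ds)}"
      "permute_list p (map to_u ds) = map to_u cs" by blast
    have len: "length cs = length ds" using ms by (metis length_map mset_eq_length)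
    have eq: "to_u (cs ! i) = to_u (ds ! p i)" if "i < length cs" for i
    proof -
      have "map to_u cs ! i = permute_list p (map to_u ds) ! i" using p(2) by simp
      also have "\<dots> = map to_u ds ! p i" using p(1) that len by (simp add: permute_list_nth)
      also have "\<dots> = to_u (ds ! p i)"
      proof -
        have "p i \<in> {..<length ds}" using permutes_in_image[OF p(1)] that len by simp
        then show ?thesis by simp
      qed
      finally show ?thesis using that by simp
    qed
    have "\<forall>i<length cs. \<exists>g. iso_fun (cs ! i) (ds ! p i) g"
      using eq Node.IH tree_iso_fun by (metis nth_mem)
    then obtain F where F: "\<forall>i<length cs. iso_fun (cs ! i) (ds ! p i) (F i)" by metis
    have pib: "bij_betw p {..<length cs} {..<length ds}"
      using p(1) len by (simp add: permutes_imp_bij)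
    show "tree_iso (Node a cs) t" using iso_build[OF pib F] t ab tree_iso_fun by blast
  qed
qed


lemma sel_count:
  "count (mset (map h (map fst (filter (\<lambda>(x, i). count (mset (map h (take i xs))) (h x) < k (h x))
      (zip xs [0..<length xs]))))) y = min (count (mset (map h xs)) y) (k y)"
proof (induction xs rule: rev_induct)
  case Nil then show ?case by simp
next
  case (snoc z xs)
  let ?P = "\<lambda>ys. (\<lambda>(x, i). count (mset (map h (take i ys))) (h x) < k (h x))"
  have zip: "zip (xs @ [z]) [0..<length (xs @ [z])] = zip xs [0..<length xs] @ [(z, length xs)]"
    by simp
  have fc: "filter (?P (xs @ [z])) (zip xs [0..<length xs]) = filter (?P xs) (zip xs [0..<length xs])"
  proof (rule filter_cong[OF refl])
    fix xi assume xin: "xi \<in> set (zip xs [0..<length xs])"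
    obtain x i where xi: "xi = (x, i)" by (cases xi)
    have "i < length xs" using xin xi set_zip_rightD by fastforce
    then show "?P (xs @ [z]) xi = ?P xs xi" using xi by simp
  qed
  show ?case
    using snoc.IH unfolding zip filter_append fc by auto
qed

lemma filter_iso_count: "length (filter (tree_iso x) ys) = count (mset (map to_u ys)) (to_u x)"
  by (induction ys) (auto simp: tree_iso_to_u)

definition gM :: "'a multiset \<Rightarrow> nat" where
  "gM M = Gcd (count M ` set_mset M)"

lemma prune_count:
  "count (mset (map to_u (prune_children cs))) U = count (mset (map to_u cs)) U div gM (mset (map to_u cs))"
proof -
  define M where "M = mset (map to_u cs)"
  have mi: "mult_iso cs x = count M (to_u x)" for x
    by (simp add: mult_iso_def filter_iso_count M_def)
  have g: "Gcd (mult_iso cs ` set cs) = gM M"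
  proof -
    have "mult_iso cs ` set cs = count M ` (to_u ` set cs)" by (auto simp: mi)
    also have "to_u ` set cs = set_mset M" by (simp add: M_def)
    finally show ?thesis by (simp add: gM_def)
  qed
  define k where "k u = count M u div gM M" for u
  have "prune_children cs = map fst (filter (\<lambda>(x, i). count (mset (map to_u (take i cs))) (to_u x) < k (to_u x))
      (zip cs [0..<length cs]))"
    unfolding prune_children_def Let_def g
    by (intro arg_cong[where f="map fst"] filter_cong) (auto simp: filter_iso_count mi k_def)
  then have "count (mset (map to_u (prune_children cs))) U = min (count M U) (k U)"
    using sel_count[where h=to_u and k=k and xs=cs and y=U] by (simp add: M_def)
  also have "\<dots> = k U" by (simp add: k_def)
  finally show ?thesis by (simp add: k_def M_def)
qed


definition propm :: "'a multiset \<Rightarrow> 'a multiset \<Rightarrow> bool" where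
  "propm M N \<longleftrightarrow> repeat_mset (size N) M = repeat_mset (size M) N"

lemma propm_count: "propm M N \<longleftrightarrow> (\<forall>x. size N * count M x = size M * count N x)"
  by (simp add: propm_def multiset_eq_iff)

lemma image_repeat: "image_mset f (repeat_mset n M) = repeat_mset n (image_mset f M)"
  by (induction n) simp_all

lemma propm_image: "propm M N \<Longrightarrow> propm (image_mset f M) (image_mset f N)"
  unfolding propm_def by (simp add: image_repeat[symmetric])

lemma gM_dvd: "gM M dvd count M x"
proof (cases "x \<in># M")
  case True then show ?thesis by (simp add: gM_def)
next
  case False
  then have "count M x = 0" by (simp add: count_eq_zero_iff)
  then show ?thesis by simp
qed

lemma zero_prop0: "(b::nat) * c = a * d \<Longrightarrow> 0 < a \<Longrightarrow> 0 < b \<Longrightarrow> (c = 0 \<longleftrightarrow> d = 0)"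
  by auto

lemma red_iff:
  "(\<forall>x. count M x div gM M = count N x div gM N) \<longleftrightarrow> ((M = {#}) = (N = {#}) \<and> propm M N)"
proof
  assume H: "\<forall>x. count M x div gM M = count N x div gM N"
  define r where "r x = count M x div gM M" for x
  have fin: "finite {x. 0 < r x}"
  proof (rule finite_subset[of _ "set_mset M"])
    show "{x. 0 < r x} \<subseteq> set_mset M"
    proof
      fix x assume "x \<in> {x. 0 < r x}"
      then have "0 < count M x div gM M" by (simp add: r_def)
      then have "count M x \<noteq> 0" by (cases "count M x = 0") simp_all
      then show "x \<in># M" by (intro count_inI) simp
    qed
  qed simp
  define R where "R = Abs_multiset r"
  define g1 where "g1 = gM M"
  define g2 where "g2 = gM N"
  have cR: "count R = r" using fin by (simp add: R_def count_Abs_multiset)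
  have cM: "count M x = g1 * r x" for x
    using gM_dvd[of M x] unfolding r_def g1_def by simp
  have cN: "count N x = g2 * r x" for x
    using gM_dvd[of N x] H unfolding r_def g2_def by simp
  have MM: "M = repeat_mset g1 R" by (simp add: multiset_eq_iff cM cR)
  have NN: "N = repeat_mset g2 R" by (simp add: multiset_eq_iff cN cR)
  have g0: "M = {#}" if gz: "gM M = 0" for M :: "'a multiset"
  proof (rule ccontr)
    assume "M \<noteq> {#}"
    then obtain x where "x \<in># M" by blast
    then have c1: "count M x \<in> count M ` set_mset M" "count M x \<noteq> 0" by auto
    have "count M ` set_mset M \<subseteq> {0}" using gz by (simp add: gM_def Gcd_0_iff)
    then have "count M x \<in> {0}" using c1(1) by (rule subsetD)
    then show False using c1(2) by simp
  qed
  have e1: "M = {#} \<longleftrightarrow> R = {#} \<or> g1 = 0" unfolding MM by (auto simp: repeat_mset_eq_empty_iff)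
  have e2: "N = {#} \<longleftrightarrow> R = {#} \<or> g2 = 0" unfolding NN by (auto simp: repeat_mset_eq_empty_iff)
  have "g1 = 0 \<Longrightarrow> M = {#}" "g2 = 0 \<Longrightarrow> N = {#}" using g0 unfolding g1_def g2_def by auto
  moreover have "g1 = 0 \<Longrightarrow> R = {#}" "g2 = 0 \<Longrightarrow> R = {#}"
    using H by (simp_all add: multiset_eq_iff cR r_def g1_def g2_def)
  ultimately have "(M = {#}) = (N = {#})" using e1 e2 by auto
  moreover have "propm M N"
    unfolding MM NN by (simp add: propm_def mult_ac)
  ultimately show "(M = {#}) = (N = {#}) \<and> propm M N" by blast
next
  assume H: "(M = {#}) = (N = {#}) \<and> propm M N"
  show "\<forall>x. count M x div gM M = count N x div gM N"
  proof (cases "M = {#}")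
    case True then show ?thesis using H by simp
  next
    case False
    then have NN: "N \<noteq> {#}" using H by simp
    define a where "a = size M"
    define b where "b = size N"
    have a0: "a > 0" using False by (simp add: a_def nonempty_has_size)
    have b0: "b > 0" using NN by (simp add: b_def nonempty_has_size)
    have pr: "b * count M x = a * count N x" for x using H by (simp add: propm_count a_def b_def)
    have S: "set_mset M = set_mset N"
    proof -
      have z: "count M x = 0 \<longleftrightarrow> count N x = 0" for x
        by (rule zero_prop0[OF pr[of x] a0 b0])
      have "x \<in># M \<longleftrightarrow> x \<in># N" for x using z[of x] by (simp add: count_eq_zero_iff)
      then show ?thesis by blast
    qed
    have "b * gM M = Gcd ((*) b ` count M ` set_mset M)"
      by (simp add: gM_def Gcd_mult)
    also have "(*) b ` count M ` set_mset M = (*) a ` count N ` set_mset N"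
      unfolding image_image S using pr by simp
    also have "Gcd \<dots> = a * gM N" by (simp add: gM_def Gcd_mult)
    finally have gg: "b * gM M = a * gM N" .
    show ?thesis
    proof
      fix x
      have "count M x div gM M = (b * count M x) div (b * gM M)" using b0 by simp
      also have "\<dots> = (a * count N x) div (a * gM N)" using pr gg by simp
      also have "\<dots> = count N x div gM N" using a0 by simp
      finally show "count M x div gM M = count N x div gM N" .
    qed
  qed
qed

lemma zero_prop: "(b::nat) * c = a * d \<Longrightarrow> 0 < a \<Longrightarrow> 0 < b \<Longrightarrow> (c = 0 \<longleftrightarrow> d = 0)"
  by auto

lemma freq_empty: "freq M = {} \<longleftrightarrow> M = {#}"
  by (simp add: freq_def)

lemma freq_iff: "freq M = freq N \<longleftrightarrow> ((M = {#}) = (N = {#}) \<and> propm M N)"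
proof
  assume H: "freq M = freq N"
  then have E: "(M = {#}) = (N = {#})" by (metis freq_empty)
  moreover have "propm M N"
  proof (cases "M = {#}")
    case True then show ?thesis using E by (simp add: propm_def)
  next
    case False
    then have NN: "N \<noteq> {#}" using E by simp
    have a0: "size M > 0" using False by (simp add: nonempty_has_size)
    have b0: "size N > 0" using NN by (simp add: nonempty_has_size)
    have S: "set_mset M = set_mset N"
    proof -
      have "fst ` freq M = set_mset M" "fst ` freq N = set_mset N"
        by (simp_all add: freq_def image_image)
      then show ?thesis using H by simp
    qed
    have "size N * count M x = size M * count N x" for x
    proof (cases "x \<in># M")
      case True
      then have "(x, of_nat (count M x) / of_nat (size M)) \<in> freq M" unfolding freq_def by blast
      then have "(x, of_nat (count M x) / of_nat (size M)) \<in> freq N" using H by simp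
      then have "(of_nat (count M x) / of_nat (size M) :: rat) = of_nat (count N x) / of_nat (size N)"
        by (auto simp: freq_def)
      moreover have "(of_nat (size M) :: rat) \<noteq> 0" "(of_nat (size N) :: rat) \<noteq> 0" using a0 b0 by auto
      ultimately have "(of_nat (count M x) :: rat) * of_nat (size N) = of_nat (count N x) * of_nat (size M)"
        using frac_eq_eq by blast
      then have "(of_nat (size N * count M x) :: rat) = of_nat (size M * count N x)"
        by (simp add: mult.commute)
      then show ?thesis by (simp only: of_nat_eq_iff)
    next
      case False
      then have "x \<notin># N" using S by simp
      then have "count N x = 0" "count M x = 0" using False by (simp_all add: count_eq_zero_iff)
      then show ?thesis by simp
    qed
    then show ?thesis by (simp add: propm_count)
  qed
  ultimately show "(M = {#}) = (N = {#}) \<and> propm M N" by blast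
next
  assume H: "(M = {#}) = (N = {#}) \<and> propm M N"
  show "freq M = freq N"
  proof (cases "M = {#}")
    case True then show ?thesis using H by simp
  next
    case False
    then have NN: "N \<noteq> {#}" using H by simp
    have a0: "size M > 0" using False by (simp add: nonempty_has_size)
    have b0: "size N > 0" using NN by (simp add: nonempty_has_size)
    have pr: "size N * count M x = size M * count N x" for x using H by (simp add: propm_count)
    have S: "set_mset M = set_mset N"
    proof -
      have z: "count M x = 0 \<longleftrightarrow> count N x = 0" for x
        by (rule zero_prop[OF pr[of x] a0 b0])
      have "x \<in># M \<longleftrightarrow> x \<in># N" for x using z[of x] by (simp add: count_eq_zero_iff)
      then show ?thesis by blast
    qed
    have r: "(of_nat (count M x) / of_nat (size M) :: rat) = of_nat (count N x) / of_nat (size N)" for x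
    proof -
      have "(of_nat (size N * count M x) :: rat) = of_nat (size M * count N x)" using pr by simp
      then have "(of_nat (count M x) :: rat) * of_nat (size N) = of_nat (count N x) * of_nat (size M)"
        by (simp add: mult.commute)
      moreover have "(of_nat (size M) :: rat) \<noteq> 0" "(of_nat (size N) :: rat) \<noteq> 0" using a0 b0 by auto
      ultimately show ?thesis using frac_eq_eq by blast
    qed
    show ?thesis unfolding freq_def S using r by simp
  qed
qed

lemma kernel_fun:
  assumes "\<forall>x\<in>D. \<forall>y\<in>D. g x = g y \<longrightarrow> f x = f y"
  shows "\<exists>\<phi>. \<forall>x\<in>D. f x = \<phi> (g x)"
proof -
  define \<phi> where "\<phi> c = f (SOME x. x \<in> D \<and> g x = c)" for c
  have "f x = \<phi> (g x)" if "x \<in> D" for x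
  proof -
    have "\<exists>y. y \<in> D \<and> g y = g x" using that by blast
    then have y: "(SOME y. y \<in> D \<and> g y = g x) \<in> D \<and> g (SOME y. y \<in> D \<and> g y = g x) = g x"
      by (rule someI_ex)
    have "f (SOME y. y \<in> D \<and> g y = g x) = f x"
      using assms[rule_format, OF conjunct1[OF y] that conjunct2[OF y]] .
    then show ?thesis by (simp add: \<phi>_def)
  qed
  then show ?thesis by blast
qed


lemma enum_mset: "finite A \<Longrightarrow> mset (enum_set A) = mset_set A"
proof -
  assume "finite A"
  then have "\<exists>xs. distinct xs \<and> set xs = A" by (metis finite_distinct_list)
  then have "distinct (enum_set A) \<and> set (enum_set A) = A" unfolding enum_set_def by (rule someI_ex)
  then show ?thesis using mset_set_set by metis
qed

lemma nbhd_sub: "graph V E \<Longrightarrow> finite (nbhd V E u) \<and> nbhd V E u \<subseteq> V"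
  by (auto simp: graph_def nbhd_def)

abbreviation NM where
  "NM enc relabel V E lab t u \<equiv> image_mset (mwl_color enc relabel V E lab t) (mset_set (nbhd V E u))"

lemma colR:
  assumes adm: "admissible_relabel enc relabel"
    and eq: "mwl_color enc relabel V E lab (Suc t) x = mwl_color enc relabel V E lab (Suc t) y"
  shows "mwl_color enc relabel V E lab t x = mwl_color enc relabel V E lab t y
    \<and> freq (NM enc relabel V E lab t x) = freq (NM enc relabel V E lab t y)"
proof -
  have inj: "inj_on (relabel t) {x. finite (snd x)}" using adm by (simp add: admissible_relabel_def)
  have fin: "finite (freq M)" for M :: "nat multiset" by (simp add: freq_def)
  have "(mwl_color enc relabel V E lab t x, freq (NM enc relabel V E lab t x))
      = (mwl_color enc relabel V E lab t y, freq (NM enc relabel V E lab t y))"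
    by (rule inj_onD[OF inj]) (use eq fin in auto)
  then show ?thesis by simp
qed

lemma col_lab:
  assumes adm: "admissible_relabel enc relabel"
  shows "mwl_color enc relabel V E lab t x = mwl_color enc relabel V E lab t y \<Longrightarrow> lab x = lab y"
proof (induction t)
  case 0
  have "inj enc" using adm by (simp add: admissible_relabel_def)
  then show ?case using 0 by (simp add: inj_eq)
next
  case (Suc t)
  then show ?case using colR[OF adm Suc.prems] by blast
qed

lemma colQ:
  assumes adm: "admissible_relabel enc relabel"
  shows "lab u = lab v \<Longrightarrow> freq (NM enc relabel V E lab t u) = freq (NM enc relabel V E lab t v)
    \<Longrightarrow> mwl_color enc relabel V E lab t u = mwl_color enc relabel V E lab t v"
proof (induction t arbitrary: u v)
  case 0
  then show ?case by simp
next
  case (Suc t)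
  let ?C = "mwl_color enc relabel V E lab"
  have "\<forall>x\<in>UNIV. \<forall>y\<in>UNIV. ?C (Suc t) x = ?C (Suc t) y \<longrightarrow> ?C t x = ?C t y"
  proof (intro ballI impI)
    fix x y assume H: "?C (Suc t) x = ?C (Suc t) y"
    show "?C t x = ?C t y" using colR[OF adm H] by blast
  qed
  from kernel_fun[OF this] obtain \<psi> where psi: "\<forall>x\<in>UNIV. ?C t x = \<psi> (?C (Suc t) x)" by blast
  have Ct: "?C t = \<psi> \<circ> ?C (Suc t)" using psi by (simp add: fun_eq_iff)
  have NN: "NM enc relabel V E lab t w = image_mset \<psi> (NM enc relabel V E lab (Suc t) w)" for w
    by (simp add: image_mset.compositionality Ct)
  from Suc.prems(2) have "(NM enc relabel V E lab (Suc t) u = {#}) = (NM enc relabel V E lab (Suc t) v = {#})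
     \<and> propm (NM enc relabel V E lab (Suc t) u) (NM enc relabel V E lab (Suc t) v)"
    by (simp only: freq_iff)
  then have "(NM enc relabel V E lab t u = {#}) = (NM enc relabel V E lab t v = {#})
     \<and> propm (NM enc relabel V E lab t u) (NM enc relabel V E lab t v)"
    unfolding NN using propm_image by auto
  then have fq: "freq (NM enc relabel V E lab t u) = freq (NM enc relabel V E lab t v)"
    by (simp only: freq_iff)
  have "?C t u = ?C t v" using Suc.IH[OF Suc.prems(1) fq] .
  then show ?case using fq by simp
qed

lemma m_unr_0: "to_u (m_unr V E lab u 0) = UNode (lab u) {#}"
  by (simp add: m_unr_def prune_children_def)

lemma m_unr_Suc: "to_u (m_unr V E lab u (Suc L)) =
  UNode (lab u) (mset (map to_u (prune_children (map (\<lambda>w. m_unr V E lab w L) (enum_set (nbhd V E u))))))"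
  by (simp add: m_unr_def comp_def)

lemma main_eq:
  assumes G: "graph V E" and adm: "admissible_relabel enc relabel"
  shows "\<forall>u\<in>V. \<forall>v\<in>V. (to_u (m_unr V E lab u L) = to_u (m_unr V E lab v L))
     = (mwl_color enc relabel V E lab L u = mwl_color enc relabel V E lab L v)"
proof (induction L)
  case 0
  have "inj enc" using adm by (simp add: admissible_relabel_def)
  then show ?case by (simp add: m_unr_0 inj_eq)
next
  case (Suc L)
  let ?C = "mwl_color enc relabel V E lab"
  let ?T = "\<lambda>w. to_u (m_unr V E lab w L)"
  define MT where "MT u = image_mset ?T (mset_set (nbhd V E u))" for u
  have msT: "mset (map to_u (map (\<lambda>w. m_unr V E lab w L) (enum_set (nbhd V E u)))) = MT u" for u
  proof -
    have "mset (map to_u (map (\<lambda>w. m_unr V E lab w L) (enum_set (nbhd V E u))))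
        = image_mset ?T (mset (enum_set (nbhd V E u)))" by (simp add: comp_def)
    moreover have "mset (enum_set (nbhd V E u)) = mset_set (nbhd V E u)"
      using enum_mset nbhd_sub[OF G] by blast
    ultimately show ?thesis by (simp add: MT_def)
  qed
  have k1: "\<exists>\<phi>. \<forall>x\<in>V. ?T x = \<phi> (?C L x)" by (rule kernel_fun) (use Suc.IH in auto)
  have k2: "\<exists>\<phi>. \<forall>x\<in>V. ?C L x = \<phi> (?T x)" by (rule kernel_fun) (use Suc.IH in auto)
  obtain \<phi>1 where p1: "\<forall>x\<in>V. ?T x = \<phi>1 (?C L x)" using k1 by blast
  obtain \<phi>2 where p2: "\<forall>x\<in>V. ?C L x = \<phi>2 (?T x)" using k2 by blast
  have MT1: "MT u = image_mset \<phi>1 (NM enc relabel V E lab L u)" for u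
  proof -
    have "MT u = image_mset (\<phi>1 \<circ> ?C L) (mset_set (nbhd V E u))"
      unfolding MT_def
    proof (rule image_mset_cong)
      fix x assume "x \<in># mset_set (nbhd V E u)"
      then have "x \<in> V" using nbhd_sub[OF G, of u] by auto
      then show "?T x = (\<phi>1 \<circ> ?C L) x" using p1 by simp
    qed
    then show ?thesis by (simp add: image_mset.compositionality)
  qed
  have MT2: "NM enc relabel V E lab L u = image_mset \<phi>2 (MT u)" for u
  proof -
    have "NM enc relabel V E lab L u = image_mset (\<phi>2 \<circ> ?T) (mset_set (nbhd V E u))"
    proof (rule image_mset_cong)
      fix x assume "x \<in># mset_set (nbhd V E u)"
      then have "x \<in> V" using nbhd_sub[OF G, of u] by auto
      then show "?C L x = (\<phi>2 \<circ> ?T) x" using p2 by simp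
    qed
    then show ?thesis by (simp add: image_mset.compositionality MT_def)
  qed
  have pe: "((MT u = {#}) = (MT v = {#}) \<and> propm (MT u) (MT v)) \<longleftrightarrow>
     ((NM enc relabel V E lab L u = {#}) = (NM enc relabel V E lab L v = {#})
       \<and> propm (NM enc relabel V E lab L u) (NM enc relabel V E lab L v))" for u v
  proof
    assume "(MT u = {#}) = (MT v = {#}) \<and> propm (MT u) (MT v)"
    then show "(NM enc relabel V E lab L u = {#}) = (NM enc relabel V E lab L v = {#})
       \<and> propm (NM enc relabel V E lab L u) (NM enc relabel V E lab L v)"
      unfolding MT2 using propm_image by auto
  next
    assume "(NM enc relabel V E lab L u = {#}) = (NM enc relabel V E lab L v = {#})
       \<and> propm (NM enc relabel V E lab L u) (NM enc relabel V E lab L v)"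
    then show "(MT u = {#}) = (MT v = {#}) \<and> propm (MT u) (MT v)"
      unfolding MT1 using propm_image by auto
  qed
  show ?case
  proof (intro ballI)
    fix u v assume u: "u \<in> V" and v: "v \<in> V"
    have "(to_u (m_unr V E lab u (Suc L)) = to_u (m_unr V E lab v (Suc L)))
       \<longleftrightarrow> lab u = lab v \<and> (\<forall>U. count (MT u) U div gM (MT u) = count (MT v) U div gM (MT v))"
      by (simp only: m_unr_Suc utree.inject multiset_eq_iff prune_count msT)
    also have "\<dots> \<longleftrightarrow> lab u = lab v \<and> freq (NM enc relabel V E lab L u) = freq (NM enc relabel V E lab L v)"
      by (simp only: red_iff pe freq_iff)
    also have "\<dots> \<longleftrightarrow> ?C (Suc L) u = ?C (Suc L) v"
    proof
      assume H: "lab u = lab v \<and> freq (NM enc relabel V E lab L u) = freq (NM enc relabel V E lab L v)"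
      have "?C L u = ?C L v" using colQ[OF adm conjunct1[OF H] conjunct2[OF H]] .
      then show "?C (Suc L) u = ?C (Suc L) v" using H by simp
    next
      assume H: "?C (Suc L) u = ?C (Suc L) v"
      have "lab u = lab v" using col_lab[OF adm H] .
      then show "lab u = lab v \<and> freq (NM enc relabel V E lab L u) = freq (NM enc relabel V E lab L v)"
        using colR[OF adm H] by blast
    qed
    finally show "(to_u (m_unr V E lab u (Suc L)) = to_u (m_unr V E lab v (Suc L)))
       = (?C (Suc L) u = ?C (Suc L) v)" .
  qed
qed

theorem mainTheorem1:
  fixes V :: "'v set" and E :: "'v \<Rightarrow> 'v \<Rightarrow> bool" and lab :: "'v \<Rightarrow> 'l"
    and enc :: "'l \<Rightarrow> nat" and relabel :: "nat \<Rightarrow> nat \<times> (nat \<times> rat) set \<Rightarrow> nat"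
    and L :: nat and u v :: 'v
  assumes "graph V E" and "admissible_relabel enc relabel"
    and "u \<in> V" and "v \<in> V"
  shows "mwl_color enc relabel V E lab L u = mwl_color enc relabel V E lab L v
     \<longleftrightarrow> tree_iso (m_unr V E lab u L) (m_unr V E lab v L)"
  using main_eq[OF assms(1,2), of lab L] assms(3,4) by (simp add: tree_iso_to_u)


end
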